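(* Let $n \ge 1$ and let $a_1, \dots, a_n$ be positive real numbers with $\sum_{i=1}^n a_i = 1$. Consider vectors $u_{(i,t)}$ indexed by $(i,t) \in [n] \times [3]$ subject to the following constraints: (1) $u_{(i,t)} \cdot u_{(i,t)} = 1$ for all $(i,t)$; (2) $u_{(i,1)} \cdot u_{(i,2)} = 0$ for all $i \in [n]$; (3) $u_{(i,3)} \cdot u_{(i,1)} = u_{(i,3)} \cdot u_{(i,2)} = \frac{1}{\sqrt{2}}$ for all $i \in [n]$; (4) $u_{(i,1)} \cdot u_{(i+1,1)} = u_{(i,2)} \cdot u_{(i+1,2)} = u_{(i,3)} \cdot u_{(i+1,3)} = \cos a_i$ for all $i \in [n]$, where the index $i+1$ is taken modulo $n$ (so $n+1$ means $1$). Then there exists a family of vectors in $\mathbb{R}^3$ satisfying these constraints if and only if there exists a family of vectors in $\mathbb{R}^2$ satisfying these constraints. *)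

theory Defs
  imports "HOL-Analysis.Analysis"
begin

text \<open>Indices are 0-based: i ranges over {0..<n} (paper: 1..n), t over {0,1,2}
  (paper: 1,2,3). The successor index i+1 is taken modulo n.\<close>

definition sdp_constraints ::
  "nat \<Rightarrow> (nat \<Rightarrow> real) \<Rightarrow> (nat \<Rightarrow> nat \<Rightarrow> 'v::real_inner) \<Rightarrow> bool" where
  "sdp_constraints n a u \<longleftrightarrow>
     (\<forall>i<n. \<forall>t<3. u i t \<bullet> u i t = 1) \<and>
     (\<forall>i<n. u i 0 \<bullet> u i 1 = 0) \<and>
     (\<forall>i<n. u i 2 \<bullet> u i 0 = 1 / sqrt 2 \<and> u i 2 \<bullet> u i 1 = 1 / sqrt 2) \<and>
     (\<forall>i<n. \<forall>t<3. u i t \<bullet> u (Suc i mod n) t = cos (a i))"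

end

theory Submission
  imports Defs
begin

lemma span2_expand:
  fixes e1 e2 w :: "'v::real_inner"
  assumes "e1 \<bullet> e1 = 1" "e2 \<bullet> e2 = 1" "e1 \<bullet> e2 = 0" "w \<in> span {e1, e2}"
  shows "w = (w \<bullet> e1) *\<^sub>R e1 + (w \<bullet> e2) *\<^sub>R e2"
proof -
  obtain k1 where "w - k1 *\<^sub>R e1 \<in> span {e2}" using assms(4) by (auto simp: span_insert)
  then obtain k2 where k2: "w - k1 *\<^sub>R e1 = k2 *\<^sub>R e2" by (auto simp: span_singleton)
  hence w: "w = k1 *\<^sub>R e1 + k2 *\<^sub>R e2" by (simp add: algebra_simps)
  have "w \<bullet> e1 = k1" "w \<bullet> e2 = k2" using assms(1-3)
    by (simp_all add: w inner_add_left inner_commute[of e2 e1])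
  thus ?thesis using w by simp
qed

lemma span2_inner:
  fixes e1 e2 w z :: "'v::real_inner"
  assumes "e1 \<bullet> e1 = 1" "e2 \<bullet> e2 = 1" "e1 \<bullet> e2 = 0" "w \<in> span {e1, e2}" "z \<in> span {e1, e2}"
  shows "w \<bullet> z = (w \<bullet> e1) * (z \<bullet> e1) + (w \<bullet> e2) * (z \<bullet> e2)"
proof -
  have "w \<bullet> z = ((w \<bullet> e1) *\<^sub>R e1 + (w \<bullet> e2) *\<^sub>R e2) \<bullet> z"
    using span2_expand[OF assms(1-4)] by simp
  also have "\<dots> = (w \<bullet> e1) * (z \<bullet> e1) + (w \<bullet> e2) * (z \<bullet> e2)"
    by (simp add: inner_add_left inner_commute[of e1 z] inner_commute[of e2 z])
  finally show ?thesis .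
qed

lemma comb_inner:
  fixes b1 b2 :: "'w::real_inner"
  assumes "b1 \<bullet> b1 = 1" "b2 \<bullet> b2 = 1" "b1 \<bullet> b2 = 0"
  shows "(x1 *\<^sub>R b1 + x2 *\<^sub>R b2) \<bullet> (y1 *\<^sub>R b1 + y2 *\<^sub>R b2) = x1 * y1 + x2 * y2"
  using assms by (simp add: inner_add_left inner_add_right inner_commute algebra_simps)

lemma transfer:
  fixes u :: "nat \<Rightarrow> nat \<Rightarrow> 'v::real_inner" and e1 e2 :: 'v and b1 b2 :: "'w::real_inner"
  assumes e: "e1 \<bullet> e1 = 1" "e2 \<bullet> e2 = 1" "e1 \<bullet> e2 = 0"
    and b: "b1 \<bullet> b1 = 1" "b2 \<bullet> b2 = 1" "b1 \<bullet> b2 = 0"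
    and sp: "\<forall>i<n. \<forall>t<3. u i t \<in> span {e1, e2}"
    and c: "sdp_constraints n a u" and n: "n \<ge> 1"
  shows "sdp_constraints n a (\<lambda>i t. (u i t \<bullet> e1) *\<^sub>R b1 + (u i t \<bullet> e2) *\<^sub>R b2)"
proof -
  have key: "((u i t \<bullet> e1) *\<^sub>R b1 + (u i t \<bullet> e2) *\<^sub>R b2) \<bullet> ((u j s \<bullet> e1) *\<^sub>R b1 + (u j s \<bullet> e2) *\<^sub>R b2)
     = u i t \<bullet> u j s" if "i < n" "t < 3" "j < n" "s < 3" for i j t s
    using comb_inner[OF b] span2_inner[OF e, of "u i t" "u j s"] sp that by simp
  have m: "Suc i mod n < n" for i using n by simp
  show ?thesis using c unfolding sdp_constraints_def
    by (simp add: key m)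
qed

lemma step3:
  fixes e1 e2 f1 f2 :: "real^3"
  assumes e: "e1 \<bullet> e1 = 1" "e2 \<bullet> e2 = 1" "e1 \<bullet> e2 = 0"
    and f: "f1 \<bullet> f1 = 1" "f2 \<bullet> f2 = 1" "f1 \<bullet> f2 = 0"
    and c: "f1 \<bullet> e1 = f2 \<bullet> e2" "f1 \<bullet> e2 + f2 \<bullet> e1 = 0"
  shows "f1 \<in> span {e1, e2} \<and> f2 \<in> span {e1, e2}"
proof -
  define r1 where "r1 = f1 - (f1 \<bullet> e1) *\<^sub>R e1 - (f1 \<bullet> e2) *\<^sub>R e2"
  define r2 where "r2 = f2 - (f2 \<bullet> e1) *\<^sub>R e1 - (f2 \<bullet> e2) *\<^sub>R e2"
  have e21: "e2 \<bullet> e1 = 0" using e by (simp add: inner_commute)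
  have o: "r1 \<bullet> e1 = 0" "r1 \<bullet> e2 = 0" "r2 \<bullet> e1 = 0" "r2 \<bullet> e2 = 0"
    using e e21 by (simp_all add: r1_def r2_def inner_diff_left)
  have o': "e1 \<bullet> r1 = 0" "e2 \<bullet> r1 = 0" "e1 \<bullet> r2 = 0" "e2 \<bullet> r2 = 0"
    using o by (simp_all add: inner_commute)
  have n1: "r1 \<bullet> r1 = 1 - (f1 \<bullet> e1)^2 - (f1 \<bullet> e2)^2"
  proof -
    have "r1 \<bullet> r1 = r1 \<bullet> f1" using o by (simp add: r1_def[of] inner_diff_right)
    also have "\<dots> = 1 - (f1 \<bullet> e1)^2 - (f1 \<bullet> e2)^2"
      using f by (simp add: r1_def inner_diff_left power2_eq_square inner_commute[of e1 f1] inner_commute[of e2 f1])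
    finally show ?thesis .
  qed
  have n2: "r2 \<bullet> r2 = 1 - (f2 \<bullet> e1)^2 - (f2 \<bullet> e2)^2"
  proof -
    have "r2 \<bullet> r2 = r2 \<bullet> f2" using o by (simp add: r2_def[of] inner_diff_right)
    also have "\<dots> = 1 - (f2 \<bullet> e1)^2 - (f2 \<bullet> e2)^2"
      using f by (simp add: r2_def inner_diff_left power2_eq_square inner_commute[of e1 f2] inner_commute[of e2 f2])
    finally show ?thesis .
  qed
  have n12: "r1 \<bullet> r2 = 0"
  proof -
    have "r1 \<bullet> r2 = r1 \<bullet> f2" using o by (simp add: r2_def inner_diff_right)
    also have "\<dots> = - (f2 \<bullet> e2) * (f2 \<bullet> e1 + f1 \<bullet> e2)"
      using f c by (simp add: r1_def inner_diff_left inner_commute[of e1 f2] eq_neg_iff_add_eq_0[symmetric] inner_commute[of e2 f2]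
          inner_commute[of f1 f2] algebra_simps)
    also have "\<dots> = 0" using c by simp
    finally show ?thesis .
  qed
  have eqn: "r1 \<bullet> r1 = r2 \<bullet> r2"
  proof -
    have "(f1 \<bullet> e2)^2 = (f2 \<bullet> e1)^2" using c(2) by (simp add: eq_neg_iff_add_eq_0[symmetric])
    thus ?thesis using n1 n2 c(1) by simp
  qed
  have r1z: "r1 = 0"
  proof (rule ccontr)
    assume "r1 \<noteq> 0"
    hence p1: "r1 \<bullet> r1 > 0" by simp
    hence p2: "r2 \<bullet> r2 > 0" using eqn by simp
    define S where "S = {e1, e2, r1, r2}"
    have ne: "e1 \<noteq> 0" "e2 \<noteq> 0" "r1 \<noteq> 0" "r2 \<noteq> 0" using e p1 p2 by auto
    have d: "e1 \<noteq> e2" "e1 \<noteq> r1" "e1 \<noteq> r2" "e2 \<noteq> r1" "e2 \<noteq> r2" "r1 \<noteq> r2"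
      using e o p1 p2 n12 by auto
    have po: "pairwise orthogonal S"
      unfolding S_def pairwise_def orthogonal_def
      using e e21 o o' n12 by (auto simp: inner_commute[of r2 r1])
    have "0 \<notin> S" using ne S_def by auto
    hence "independent S" using po pairwise_orthogonal_independent by blast
    hence "card S \<le> DIM(real^3)" using independent_bound by blast
    moreover have "card S = 4" using d unfolding S_def by simp
    ultimately show False by simp
  qed
  hence r2z: "r2 = 0" using eqn by simp
  have "f1 = (f1 \<bullet> e1) *\<^sub>R e1 + (f1 \<bullet> e2) *\<^sub>R e2" using r1z by (simp add: r1_def algebra_simps)
  moreover have "f2 = (f2 \<bullet> e1) *\<^sub>R e1 + (f2 \<bullet> e2) *\<^sub>R e2" using r2z by (simp add: r2_def algebra_simps)
  moreover have "x *\<^sub>R e1 + y *\<^sub>R e2 \<in> span {e1, e2}" for x y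
    by (intro span_add span_mul span_base) auto
  ultimately show ?thesis by metis
qed

lemma third:
  fixes u0 u1 w :: "'v::real_inner"
  assumes "u0 \<bullet> u0 = 1" "u1 \<bullet> u1 = 1" "u0 \<bullet> u1 = 0" "w \<bullet> w = 1"
    "w \<bullet> u0 = 1 / sqrt 2" "w \<bullet> u1 = 1 / sqrt 2"
  shows "w = (1 / sqrt 2) *\<^sub>R (u0 + u1)"
proof -
  define s where "s = 1 / sqrt (2::real)"
  have s2: "s * s = 1/2" by (simp add: s_def)
  define d where "d = w - s *\<^sub>R (u0 + u1)"
  have u10: "u1 \<bullet> u0 = 0" using assms by (simp add: inner_commute)
  have a: "d \<bullet> u0 = 0" "d \<bullet> u1 = 0" using assms u10
    by (simp_all add: d_def s_def inner_diff_left inner_add_left)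
  have "d \<bullet> w = 1 - 2 * (s * s)" using assms
    by (simp add: d_def s_def inner_diff_left inner_add_left inner_commute[of u0 w] inner_commute[of u1 w])
  hence "d \<bullet> d = 0" using a s2 by (simp add: d_def inner_diff_right inner_add_right)
  hence "d = 0" by simp
  thus ?thesis by (simp add: d_def s_def)
qed

lemma cross:
  fixes g1 g2 f1 f2 :: "'v::real_inner"
  assumes "((1 / sqrt 2) *\<^sub>R (g1 + g2)) \<bullet> ((1 / sqrt 2) *\<^sub>R (f1 + f2)) = c"
    "g1 \<bullet> f1 = c" "g2 \<bullet> f2 = c"
  shows "f1 \<bullet> g2 + f2 \<bullet> g1 = 0"
proof -
  have "((1 / sqrt 2) *\<^sub>R (g1 + g2)) \<bullet> ((1 / sqrt 2) *\<^sub>R (f1 + f2))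
     = (1 / sqrt 2) * (1 / sqrt 2) * ((g1 + g2) \<bullet> (f1 + f2))"
    by simp
  also have "\<dots> = (g1 \<bullet> f1 + g1 \<bullet> f2 + g2 \<bullet> f1 + g2 \<bullet> f2) / 2"
    by (simp add: inner_add_left inner_add_right)
  finally have "((1 / sqrt 2) *\<^sub>R (g1 + g2)) \<bullet> ((1 / sqrt 2) *\<^sub>R (f1 + f2))
     = (g1 \<bullet> f1 + g1 \<bullet> f2 + g2 \<bullet> f1 + g2 \<bullet> f2) / 2" .
  thus ?thesis using assms by (simp add: inner_commute)
qed

lemma all_span2:
  fixes w :: "real^2"
  shows "w \<in> span {axis 1 1, axis 2 1}"
proof -
  have "w = (w $ 1) *\<^sub>R axis 1 1 + (w $ 2) *\<^sub>R axis 2 1"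
    by (simp add: vec_eq_iff forall_2 axis_def)
  moreover have "x *\<^sub>R axis 1 1 + y *\<^sub>R axis 2 1 \<in> span {axis 1 (1::real), axis (2::2) 1}" for x y
    by (intro span_add span_mul span_base) auto
  ultimately show ?thesis by metis
qed

lemma dir32:
  fixes n :: nat and a :: "nat \<Rightarrow> real" and u :: "nat \<Rightarrow> nat \<Rightarrow> real^3"
  assumes "n \<ge> 1" and c: "sdp_constraints n a u"
  shows "\<exists>u :: nat \<Rightarrow> nat \<Rightarrow> real^2. sdp_constraints n a u"
proof -
  have n0: "0 < n" using assms(1) by simp
  note cd = c[unfolded sdp_constraints_def]
  have nrm: "u i t \<bullet> u i t = 1" if "i < n" "t < 3" for i t using cd that by blast
  have orth: "u i 0 \<bullet> u i 1 = 0" if "i < n" for i using cd that by blast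
  have th: "u i 2 = (1 / sqrt 2) *\<^sub>R (u i 0 + u i 1)" if "i < n" for i
    using third[of "u i 0" "u i 1" "u i 2"] nrm[OF that] orth[OF that] cd that by simp
  define S where "S = span {u 0 0, u 0 1}"
  have fr: "u i 0 \<in> S \<and> u i 1 \<in> S" if "i < n" for i
    using that
  proof (induction i)
    case 0
    then show ?case by (simp add: S_def span_base)
  next
    case (Suc i)
    hence i: "i < n" and m: "Suc i mod n = Suc i" by auto
    have IH: "u i 0 \<in> S" "u i 1 \<in> S" using Suc i by auto
    have co: "\<forall>t<3. u i t \<bullet> u (Suc i) t = cos (a i)" using cd i m by metis
    have c0: "u i 0 \<bullet> u (Suc i) 0 = cos (a i)" and c1: "u i 1 \<bullet> u (Suc i) 1 = cos (a i)"
      and c2: "u i 2 \<bullet> u (Suc i) 2 = cos (a i)" using co by auto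
    have cr: "u (Suc i) 0 \<bullet> u i 1 + u (Suc i) 1 \<bullet> u i 0 = 0"
      using cross[of "u i 0" "u i 1" "u (Suc i) 0" "u (Suc i) 1" "cos (a i)"] c0 c1 c2
        th[OF i] th[OF Suc.prems] by simp
    have "u (Suc i) 0 \<in> span {u i 0, u i 1} \<and> u (Suc i) 1 \<in> span {u i 0, u i 1}"
      apply (rule step3)
      using nrm[OF i] orth[OF i] nrm[OF Suc.prems] orth[OF Suc.prems] c0 c1 cr
      by (auto simp: inner_commute)
    moreover have "span {u i 0, u i 1} \<subseteq> S"
      using IH unfolding S_def by (intro span_minimal subspace_span) auto
    ultimately show ?case by blast
  qed
  have sp: "\<forall>i<n. \<forall>t<3. u i t \<in> S"
  proof (intro allI impI)
    fix i t :: nat assume i: "i < n" and t: "t < 3"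
    hence "t = 0 \<or> t = 1 \<or> t = 2" by auto
    moreover have "u i 2 \<in> S" using fr[OF i] th[OF i] unfolding S_def
      by (auto intro: span_add span_mul)
    ultimately show "u i t \<in> S" using fr[OF i] by auto
  qed
  have "sdp_constraints n a (\<lambda>i t. (u i t \<bullet> u 0 0) *\<^sub>R (axis 1 1 :: real^2) + (u i t \<bullet> u 0 1) *\<^sub>R axis 2 1)"
    apply (rule transfer)
    using nrm[OF n0] orth[OF n0] sp c assms(1) by (auto simp: S_def inner_axis_axis)
  thus ?thesis by blast
qed

lemma dir23:
  fixes n :: nat and a :: "nat \<Rightarrow> real" and u :: "nat \<Rightarrow> nat \<Rightarrow> real^2"
  assumes "n \<ge> 1" and c: "sdp_constraints n a u"
  shows "\<exists>u :: nat \<Rightarrow> nat \<Rightarrow> real^3. sdp_constraints n a u"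
proof -
  have "sdp_constraints n a (\<lambda>i t. (u i t \<bullet> axis 1 1) *\<^sub>R (axis 1 1 :: real^3) + (u i t \<bullet> axis 2 1) *\<^sub>R axis 2 1)"
    apply (rule transfer)
    using all_span2 c assms(1) by (auto simp: inner_axis_axis)
  thus ?thesis by blast
qed

theorem lemma3p1:
  fixes n :: nat and a :: "nat \<Rightarrow> real"
  assumes "n \<ge> 1"
    and "\<forall>i<n. a i > 0"
    and "(\<Sum>i<n. a i) = 1"
  shows "(\<exists>u :: nat \<Rightarrow> nat \<Rightarrow> real^3. sdp_constraints n a u) \<longleftrightarrow>
         (\<exists>u :: nat \<Rightarrow> nat \<Rightarrow> real^2. sdp_constraints n a u)"
  using dir32 dir23 assms(1) by blast

end
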